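(* Let $\varphi$ be an $\mathrm{SLTL}$ formula whose standpoint symbols other than $*$ are $s_1,\dots,s_n$ (treated as propositional variables in $\mathrm{PTL}\times\mathbf{S5}$, distinct from those of $\varphi$). Let $t_2$ be the translation that is the identity on propositional variables, commutes with Boolean connectives and with $X$ and $U$, and satisfies $t_2(\Diamond_*\psi)=\Diamond t_2(\psi)$, $t_2(\Box_*\psi)=\Box t_2(\psi)$, $t_2(\Diamond_s\psi)=\Diamond(s\wedge t_2(\psi))$, $t_2(\Box_s\psi)=\Box(s\to t_2(\psi))$, and $t_2(s\preceq s')=\Box(s\to s')$ for standpoint symbols $s,s'$. Let $\chi_n=\bigwedge_{1\le i\le n}\Diamond s_i\wedge\Box\bigwedge_{1\le i\le n}(G s_i\vee G\neg s_i)$, where $G\psi$ abbreviates "always in the future" $\neg(\top\,U\,\neg\psi)$. Then $\varphi$ is $\mathrm{SLTL}$-satisfiable if and only if $\chi_n\wedge t_2(\varphi)$ is $\mathrm{PTL}\times\mathbf{S5}$-satisfiable.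
   Context: Fix a countably infinite set $\mathcal{P}$ of propositional variables and a countably infinite set $\mathcal{S}$ of standpoint symbols containing a distinguished universal standpoint symbol $*$. SLTL: formulae $\varphi ::= p \mid s \preceq s' \mid \neg\varphi \mid \varphi\wedge\varphi \mid \Diamond_s\varphi \mid \Box_s\varphi \mid X\varphi \mid \varphi\,U\,\varphi$ ($p\in\mathcal{P}$, $s,s'\in\mathcal{S}$). A model is $M=(\Pi,\lambda)$, $\Pi\neq\emptyset$ a set of traces $\sigma:\mathbb{N}\to 2^{\mathcal{P}}$, $\lambda:\mathcal{S}\to 2^{\Pi}\setminus\{\emptyset\}$ with $\lambda( * )=\Pi$. Semantics: $M,\sigma,i\models p$ iff $p\in\sigma(i)$; $M,\sigma,i\models s\preceq s'$ iff $\lambda(s)\subseteq\lambda(s')$; Boolean clauses as usual; $M,\sigma,i\models\Diamond_s\psi$ iff $M,\sigma',i\models\psi$ for some $\sigma'\in\lambda(s)$; $\Box_s$ dually with "for all"; $M,\sigma,i\models X\psi$ iff $M,\sigma,i+1\models\psi$; $M,\sigma,i\models\psi\,U\,\chi$ iff there is $i'\ge i$ with $M,\sigma,i'\models\chi$ and $M,\sigma,i''\models\psi$ for all $i\le i''<i'$. $\varphi$ is SLTL-satisfiable iff $M,\sigma,0\models\varphi$ for some $M=(\Pi,\lambda)$ and $\sigma\in\Pi$. $\mathrm{PTL}\times\mathbf{S5}$: formulae $\varphi ::= p \mid \neg\varphi\mid\varphi\wedge\varphi\mid\Diamond\varphi\mid\Box\varphi\mid X\varphi\mid\varphi\,U\,\varphi$.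 A model is $M=(\mathbb{N}\times W,R,L)$ with $W\neq\emptyset$, $R$ an equivalence relation on $W$, $L:\mathbb{N}\times W\to 2^{\mathcal{P}}$. Semantics: $M,(n,w)\models p$ iff $p\in L(n,w)$; $\Diamond\psi$ (resp. $\Box\psi$) holds at $(n,w)$ iff $\psi$ holds at $(n,w')$ for some (resp. all) $w'$ with $wRw'$; $X\psi$ holds at $(n,w)$ iff $\psi$ holds at $(n+1,w)$; $\psi\,U\,\chi$ holds at $(n,w)$ iff there is $n'\ge n$ with $\chi$ at $(n',w)$ and $\psi$ at $(n'',w)$ for all $n\le n''<n'$. A formula is satisfiable iff it holds at some point of some model. *)

theory Defs
  imports Main
begin

datatype sp = Star | Sp nat

datatype sltl =
    SVar nat
  | SSharp sp sp
  | SNeg sltl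
  | SAnd sltl sltl
  | SDia sp sltl
  | SBox sp sltl
  | SX sltl
  | SU sltl sltl

type_synonym trace = "nat \<Rightarrow> nat set"

fun ssat :: "trace set \<Rightarrow> (sp \<Rightarrow> trace set) \<Rightarrow> trace \<Rightarrow> nat \<Rightarrow> sltl \<Rightarrow> bool" where
  "ssat P lam \<sigma> i (SVar p) = (p \<in> \<sigma> i)"
| "ssat P lam \<sigma> i (SSharp s s') = (lam s \<subseteq> lam s')"
| "ssat P lam \<sigma> i (SNeg \<psi>) = (\<not> ssat P lam \<sigma> i \<psi>)"
| "ssat P lam \<sigma> i (SAnd \<psi> \<chi>) = (ssat P lam \<sigma> i \<psi> \<and> ssat P lam \<sigma> i \<chi>)"
| "ssat P lam \<sigma> i (SDia s \<psi>) = (\<exists>\<sigma>'\<in>lam s. ssat P lam \<sigma>' i \<psi>)"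
| "ssat P lam \<sigma> i (SBox s \<psi>) = (\<forall>\<sigma>'\<in>lam s. ssat P lam \<sigma>' i \<psi>)"
| "ssat P lam \<sigma> i (SX \<psi>) = ssat P lam \<sigma> (Suc i) \<psi>"
| "ssat P lam \<sigma> i (SU \<psi> \<chi>) =
     (\<exists>i'\<ge>i. ssat P lam \<sigma> i' \<chi> \<and> (\<forall>i''. i \<le> i'' \<and> i'' < i' \<longrightarrow> ssat P lam \<sigma> i'' \<psi>))"

definition sltl_model :: "trace set \<Rightarrow> (sp \<Rightarrow> trace set) \<Rightarrow> bool" where
  "sltl_model P lam \<longleftrightarrow> P \<noteq> {} \<and> (\<forall>s. lam s \<subseteq> P \<and> lam s \<noteq> {}) \<and> lam Star = P"

definition sltl_satisfiable :: "sltl \<Rightarrow> bool" where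
  "sltl_satisfiable \<phi> \<longleftrightarrow> (\<exists>P lam \<sigma>. sltl_model P lam \<and> \<sigma> \<in> P \<and> ssat P lam \<sigma> 0 \<phi>)"

fun sp_syms :: "sp \<Rightarrow> nat set" where
  "sp_syms Star = {}"
| "sp_syms (Sp k) = {k}"

fun stps :: "sltl \<Rightarrow> nat set" where
  "stps (SVar p) = {}"
| "stps (SSharp s s') = sp_syms s \<union> sp_syms s'"
| "stps (SNeg \<psi>) = stps \<psi>"
| "stps (SAnd \<psi> \<chi>) = stps \<psi> \<union> stps \<chi>"
| "stps (SDia s \<psi>) = sp_syms s \<union> stps \<psi>"
| "stps (SBox s \<psi>) = sp_syms s \<union> stps \<psi>"
| "stps (SX \<psi>) = stps \<psi>"
| "stps (SU \<psi> \<chi>) = stps \<psi> \<union> stps \<chi>"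

datatype 'a ptl =
    PVar 'a
  | PNeg "'a ptl"
  | PAnd "'a ptl" "'a ptl"
  | PDia "'a ptl"
  | PBox "'a ptl"
  | PX "'a ptl"
  | PU "'a ptl" "'a ptl"

fun psat :: "'w set \<Rightarrow> ('w \<times> 'w) set \<Rightarrow> (nat \<times> 'w \<Rightarrow> 'a set) \<Rightarrow> nat \<Rightarrow> 'w \<Rightarrow> 'a ptl \<Rightarrow> bool" where
  "psat W R L n w (PVar p) = (p \<in> L (n, w))"
| "psat W R L n w (PNeg \<psi>) = (\<not> psat W R L n w \<psi>)"
| "psat W R L n w (PAnd \<psi> \<chi>) = (psat W R L n w \<psi> \<and> psat W R L n w \<chi>)"
| "psat W R L n w (PDia \<psi>) = (\<exists>w'. (w, w') \<in> R \<and> psat W R L n w' \<psi>)"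
| "psat W R L n w (PBox \<psi>) = (\<forall>w'. (w, w') \<in> R \<longrightarrow> psat W R L n w' \<psi>)"
| "psat W R L n w (PX \<psi>) = psat W R L (Suc n) w \<psi>"
| "psat W R L n w (PU \<psi> \<chi>) =
     (\<exists>n'\<ge>n. psat W R L n' w \<chi> \<and> (\<forall>n''. n \<le> n'' \<and> n'' < n' \<longrightarrow> psat W R L n'' w \<psi>))"

definition ptl_model :: "'w set \<Rightarrow> ('w \<times> 'w) set \<Rightarrow> bool" where
  "ptl_model W R \<longleftrightarrow> W \<noteq> {} \<and> equiv W R"

definition ptl_satisfiable :: "'w itself \<Rightarrow> 'a ptl \<Rightarrow> bool" where
  "ptl_satisfiable _ \<phi> \<longleftrightarrow>
     (\<exists>(W :: 'w set) R L n w. ptl_model W R \<and> w \<in> W \<and> psat W R L n w \<phi>)"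

definition ptop :: "'a ptl" where
  "ptop = PNeg (PAnd (PVar undefined) (PNeg (PVar undefined)))"

definition por :: "'a ptl \<Rightarrow> 'a ptl \<Rightarrow> 'a ptl" where
  "por a b = PNeg (PAnd (PNeg a) (PNeg b))"

definition pimp :: "'a ptl \<Rightarrow> 'a ptl \<Rightarrow> 'a ptl" where
  "pimp a b = PNeg (PAnd a (PNeg b))"

definition PG :: "'a ptl \<Rightarrow> 'a ptl" where
  "PG a = PNeg (PU ptop (PNeg a))"

fun pconj :: "'a ptl list \<Rightarrow> 'a ptl" where
  "pconj [] = ptop"
| "pconj (a # as) = PAnd a (pconj as)"

text \<open>PTL x S5 variables: Inl p for the propositional variable p of SLTL,
  Inr k for the standpoint symbol Sp k (so these are distinct).\<close>

fun sp_to_ptl :: "sp \<Rightarrow> (nat + nat) ptl" where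
  "sp_to_ptl Star = ptop"
| "sp_to_ptl (Sp k) = PVar (Inr k)"

fun t2 :: "sltl \<Rightarrow> (nat + nat) ptl" where
  "t2 (SVar p) = PVar (Inl p)"
| "t2 (SSharp s s') = PBox (pimp (sp_to_ptl s) (sp_to_ptl s'))"
| "t2 (SNeg \<psi>) = PNeg (t2 \<psi>)"
| "t2 (SAnd \<psi> \<chi>) = PAnd (t2 \<psi>) (t2 \<chi>)"
| "t2 (SDia Star \<psi>) = PDia (t2 \<psi>)"
| "t2 (SDia (Sp k) \<psi>) = PDia (PAnd (PVar (Inr k)) (t2 \<psi>))"
| "t2 (SBox Star \<psi>) = PBox (t2 \<psi>)"
| "t2 (SBox (Sp k) \<psi>) = PBox (pimp (PVar (Inr k)) (t2 \<psi>))"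
| "t2 (SX \<psi>) = PX (t2 \<psi>)"
| "t2 (SU \<psi> \<chi>) = PU (t2 \<psi>) (t2 \<chi>)"

definition chi :: "sltl \<Rightarrow> (nat + nat) ptl" where
  "chi \<phi> = (let ks = sorted_list_of_set (stps \<phi>) in
     PAnd (pconj (map (\<lambda>k. PDia (PVar (Inr k))) ks))
          (PBox (pconj (map (\<lambda>k. por (PG (PVar (Inr k))) (PG (PNeg (PVar (Inr k))))) ks))))"

end

theory Submission
  imports Defs
begin

fun svars :: "sltl \<Rightarrow> nat set" where
  "svars (SVar p) = {p}"
| "svars (SSharp s s') = {}"
| "svars (SNeg \<psi>) = svars \<psi>"
| "svars (SAnd \<psi> \<chi>) = svars \<psi> \<union> svars \<chi>"
| "svars (SDia s \<psi>) = svars \<psi>"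
| "svars (SBox s \<psi>) = svars \<psi>"
| "svars (SX \<psi>) = svars \<psi>"
| "svars (SU \<psi> \<chi>) = svars \<psi> \<union> svars \<chi>"

lemma finite_svars: "finite (svars \<psi>)"
  by (induction \<psi>) auto

lemma finite_sp_syms: "finite (sp_syms s)"
  by (cases s) auto

lemma finite_stps: "finite (stps \<psi>)"
  by (induction \<psi>) (auto simp: finite_sp_syms)

lemma psat_ptop[simp]: "psat W R L n w ptop"
  by (simp add: ptop_def)

lemma psat_por[simp]: "psat W R L n w (por a b) = (psat W R L n w a \<or> psat W R L n w b)"
  by (simp add: por_def)

lemma psat_pimp[simp]: "psat W R L n w (pimp a b) = (psat W R L n w a \<longrightarrow> psat W R L n w b)"
  by (simp add: pimp_def)

lemma psat_PG[simp]: "psat W R L n w (PG a) = (\<forall>n'\<ge>n. psat W R L n' w a)"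
  by (auto simp: PG_def)

lemma psat_pconj[simp]: "psat W R L n w (pconj xs) = (\<forall>x\<in>set xs. psat W R L n w x)"
  by (induction xs) auto

fun insp1 :: "trace set \<Rightarrow> (sp \<Rightarrow> trace set) \<Rightarrow> sp \<Rightarrow> trace \<Rightarrow> bool" where
  "insp1 P lam Star \<tau> = True"
| "insp1 P lam (Sp k) \<tau> = (\<tau> \<in> lam (Sp k))"

lemma dir1:
  assumes m: "sltl_model P lam" and t: "\<tau> \<in> P"
  shows "ssat P lam \<tau> i \<psi> = psat P (P\<times>P) (\<lambda>(j,\<tau>'). Inl ` \<tau>' j \<union> Inr ` {k. \<tau>' \<in> lam (Sp k)}) i \<tau> (t2 \<psi>)"
  using t
proof (induction \<psi> arbitrary: \<tau> i)
  case (SSharp s s')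
  have sub: "\<And>s. lam s \<subseteq> P" and st: "lam Star = P" using m by (auto simp: sltl_model_def)
  have sp: "\<And>s \<tau>' j. \<tau>' \<in> P \<Longrightarrow> psat P (P\<times>P) (\<lambda>(j,\<tau>'). Inl ` \<tau>' j \<union> Inr ` {k. \<tau>' \<in> lam (Sp k)}) j \<tau>' (sp_to_ptl s) = (\<tau>' \<in> lam s)"
    subgoal for s \<tau>' j using st by (cases s) auto done
  have "(lam s \<subseteq> lam s') = (\<forall>\<tau>'\<in>P. \<tau>' \<in> lam s \<longrightarrow> \<tau>' \<in> lam s')"
    using sub by blast
  then show ?case using SSharp sp by auto
next
  case (SDia s \<psi>)
  have sub: "\<And>s. lam s \<subseteq> P" and st: "lam Star = P" using m by (auto simp: sltl_model_def)
  show ?case using SDia sub st by (cases s) (auto, blast+)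
next
  case (SBox s \<psi>)
  have sub: "\<And>s. lam s \<subseteq> P" and st: "lam Star = P" using m by (auto simp: sltl_model_def)
  show ?case using SBox sub st by (cases s) (auto, blast+)
qed auto


fun insp2 :: "(nat \<times> 'w \<Rightarrow> (nat + nat) set) \<Rightarrow> nat \<Rightarrow> sp \<Rightarrow> 'w \<Rightarrow> bool" where
  "insp2 L n Star w = True"
| "insp2 L n (Sp k) w = (Inr k \<in> L (n, w))"

locale d2 =
  fixes W :: "'w set" and R :: "('w \<times> 'w) set" and L :: "nat \<times> 'w \<Rightarrow> (nat + nat) set"
    and C :: "'w set" and w :: 'w and S :: "nat set" and n :: nat and m :: nat
    and \<tau> :: "'w \<Rightarrow> trace" and lam :: "sp \<Rightarrow> trace set"
  assumes eq: "equiv W R"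
    and C_def: "C = R `` {w}"
    and G: "\<forall>w'\<in>C. \<forall>k\<in>S. \<forall>j\<ge>n. (Inr k \<in> L (j, w')) = (Inr k \<in> L (n, w'))"
    and tau: "\<And>w' i. \<tau> w' i = {p. p < m \<and> Inl p \<in> L (n+i, w')} \<union> {m + k | k. Inr k \<in> L (n, w')}"
    and lam: "\<And>s. lam s = \<tau> ` {w'\<in>C. sp_syms s \<subseteq> S \<longrightarrow> insp2 L n s w'}"
begin

lemma RC: "w1 \<in> C \<Longrightarrow> ((w1, w2) \<in> R) = (w2 \<in> C)"
  using eq unfolding C_def equiv_def sym_def trans_def by blast

lemma mem: assumes w1: "w1 \<in> C" and sS: "sp_syms s \<subseteq> S"
  shows "(\<tau> w1 \<in> lam s) = insp2 L n s w1"
proof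
  assume "\<tau> w1 \<in> lam s"
  then obtain w2 where w2: "w2 \<in> C" "insp2 L n s w2" "\<tau> w1 = \<tau> w2" using lam sS by auto
  show "insp2 L n s w1"
  proof (cases s)
    case (Sp k)
    then have "m + k \<in> \<tau> w2 0" using w2 tau by simp
    then have "m + k \<in> \<tau> w1 0" using w2 by simp
    then show ?thesis using Sp tau by simp
  qed simp
next
  assume "insp2 L n s w1"
  then show "\<tau> w1 \<in> lam s" using lam w1 by blast
qed

lemma spp: assumes "w1 \<in> C" "sp_syms s \<subseteq> S"
  shows "psat W R L (n+j) w1 (sp_to_ptl s) = insp2 L n s w1"
proof (cases s)
  case (Sp k)
  have "k \<in> S" using assms Sp by simp
  then have "(Inr k \<in> L (n+j, w1)) = (Inr k \<in> L (n, w1))"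
    using G assms(1) le_add1 by blast
  then show ?thesis using Sp by simp
qed simp

lemma lamsub: "lam s \<subseteq> \<tau> ` C" using lam by blast

lemma lamE: assumes "x \<in> lam s" "sp_syms s \<subseteq> S"
  obtains w2 where "w2 \<in> C" "x = \<tau> w2" "insp2 L n s w2"
  using assms lam by blast

lemma exlam: assumes "sp_syms s \<subseteq> S"
  shows "(\<exists>\<sigma>'\<in>lam s. Q \<sigma>') = (\<exists>w2\<in>C. insp2 L n s w2 \<and> Q (\<tau> w2))"
  using assms mem lamE by metis

lemma alllam: assumes "sp_syms s \<subseteq> S"
  shows "(\<forall>\<sigma>'\<in>lam s. Q \<sigma>') = (\<forall>w2\<in>C. insp2 L n s w2 \<longrightarrow> Q (\<tau> w2))"
  using assms mem lamE by metis

lemma sublam: assumes "sp_syms s \<subseteq> S" "sp_syms s' \<subseteq> S"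
  shows "(lam s \<subseteq> lam s') = (\<forall>w2\<in>C. insp2 L n s w2 \<longrightarrow> insp2 L n s' w2)"
  using assms mem lamE by (metis subsetI subsetD)

lemma exR: "w1 \<in> C \<Longrightarrow> (\<exists>w2. (w1, w2) \<in> R \<and> Q w2) = (\<exists>w2\<in>C. Q w2)"
  using RC by blast

lemma allR: "w1 \<in> C \<Longrightarrow> (\<forall>w2. (w1, w2) \<in> R \<longrightarrow> Q w2) = (\<forall>w2\<in>C. Q w2)"
  using RC by blast

lemma main: "stps \<psi> \<subseteq> S \<Longrightarrow> svars \<psi> \<subseteq> {..<m} \<Longrightarrow> w' \<in> C \<Longrightarrow>
     ssat (\<tau> ` C) lam (\<tau> w') i \<psi> = psat W R L (n+i) w' (t2 \<psi>)"
proof (induction \<psi> arbitrary: w' i)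
  case (SVar p)
  then show ?case using tau by auto
next
  case (SSharp s s')
  have a: "sp_syms s \<subseteq> S" "sp_syms s' \<subseteq> S" using SSharp.prems by auto
  have "ssat (\<tau> ` C) lam (\<tau> w') i (SSharp s s') = (\<forall>w2\<in>C. insp2 L n s w2 \<longrightarrow> insp2 L n s' w2)"
    using sublam[OF a] by simp
  also have "\<dots> = (\<forall>w2\<in>C. psat W R L (n+i) w2 (sp_to_ptl s) \<longrightarrow> psat W R L (n+i) w2 (sp_to_ptl s'))"
    using spp a by auto
  also have "\<dots> = psat W R L (n+i) w' (t2 (SSharp s s'))"
    using allR[OF SSharp.prems(3)] by simp
  finally show ?case .
next
  case (SNeg \<psi>)
  then show ?case by simp
next
  case (SAnd \<psi> \<chi>)
  then show ?case by simp
next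
  case (SDia s \<psi>)
  have a: "sp_syms s \<subseteq> S" and IH: "\<And>w2. w2 \<in> C \<Longrightarrow> ssat (\<tau> ` C) lam (\<tau> w2) i \<psi> = psat W R L (n+i) w2 (t2 \<psi>)"
    using SDia by auto
  have "ssat (\<tau> ` C) lam (\<tau> w') i (SDia s \<psi>) = (\<exists>w2\<in>C. insp2 L n s w2 \<and> ssat (\<tau> ` C) lam (\<tau> w2) i \<psi>)"
    using exlam[OF a] by simp
  also have "\<dots> = (\<exists>w2\<in>C. psat W R L (n+i) w2 (sp_to_ptl s) \<and> psat W R L (n+i) w2 (t2 \<psi>))"
    using spp[OF _ a] IH by blast
  also have "\<dots> = psat W R L (n+i) w' (t2 (SDia s \<psi>))"
    using exR[OF SDia.prems(3)] by (cases s) simp_all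
  finally show ?case .
next
  case (SBox s \<psi>)
  have a: "sp_syms s \<subseteq> S" and IH: "\<And>w2. w2 \<in> C \<Longrightarrow> ssat (\<tau> ` C) lam (\<tau> w2) i \<psi> = psat W R L (n+i) w2 (t2 \<psi>)"
    using SBox by auto
  have "ssat (\<tau> ` C) lam (\<tau> w') i (SBox s \<psi>) = (\<forall>w2\<in>C. insp2 L n s w2 \<longrightarrow> ssat (\<tau> ` C) lam (\<tau> w2) i \<psi>)"
    using alllam[OF a] by simp
  also have "\<dots> = (\<forall>w2\<in>C. psat W R L (n+i) w2 (sp_to_ptl s) \<longrightarrow> psat W R L (n+i) w2 (t2 \<psi>))"
    using spp[OF _ a] IH by blast
  also have "\<dots> = psat W R L (n+i) w' (t2 (SBox s \<psi>))"
    using allR[OF SBox.prems(3)] by (cases s) simp_all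
  finally show ?case .
next
  case (SX \<psi>)
  then show ?case by simp
next
  case (SU \<psi> \<chi>)
  have IH1: "\<And>j. ssat (\<tau> ` C) lam (\<tau> w') j \<psi> = psat W R L (n+j) w' (t2 \<psi>)"
    and IH2: "\<And>j. ssat (\<tau> ` C) lam (\<tau> w') j \<chi> = psat W R L (n+j) w' (t2 \<chi>)"
    using SU by auto
  show ?case
  proof
    assume "ssat (\<tau> ` C) lam (\<tau> w') i (SU \<psi> \<chi>)"
    then obtain i' where "i' \<ge> i" "ssat (\<tau> ` C) lam (\<tau> w') i' \<chi>"
      "\<forall>i''. i \<le> i'' \<and> i'' < i' \<longrightarrow> ssat (\<tau> ` C) lam (\<tau> w') i'' \<psi>" by auto
    then have A: "i' \<ge> i" and B: "psat W R L (n+i') w' (t2 \<chi>)"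
      and D: "\<forall>i''. i \<le> i'' \<and> i'' < i' \<longrightarrow> psat W R L (n+i'') w' (t2 \<psi>)"
      by (auto simp: IH1 IH2)
    have E: "\<forall>n''. n+i \<le> n'' \<and> n'' < n+i' \<longrightarrow> psat W R L n'' w' (t2 \<psi>)"
    proof (intro allI impI)
      fix n'' assume h: "n+i \<le> n'' \<and> n'' < n+i'"
      then have "i \<le> n''-n \<and> n''-n < i'" by linarith
      then have "psat W R L (n+(n''-n)) w' (t2 \<psi>)" using D by blast
      moreover have "n+(n''-n) = n''" using h by linarith
      ultimately show "psat W R L n'' w' (t2 \<psi>)" by simp
    qed
    show "psat W R L (n+i) w' (t2 (SU \<psi> \<chi>))"
      using A B E by (simp only: t2.simps psat.simps) (intro exI[of _ "n+i'"], simp)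
  next
    assume "psat W R L (n+i) w' (t2 (SU \<psi> \<chi>))"
    then obtain n' where A: "n' \<ge> n+i" and B: "psat W R L n' w' (t2 \<chi>)"
      and D: "\<forall>n''. n+i \<le> n'' \<and> n'' < n' \<longrightarrow> psat W R L n'' w' (t2 \<psi>)" by auto
    have B': "ssat (\<tau> ` C) lam (\<tau> w') (n'-n) \<chi>" using B A IH2[of "n'-n"] by simp
    have E: "\<forall>i''. i \<le> i'' \<and> i'' < n'-n \<longrightarrow> ssat (\<tau> ` C) lam (\<tau> w') i'' \<psi>"
    proof (intro allI impI)
      fix i'' assume h: "i \<le> i'' \<and> i'' < n'-n"
      then have "n+i \<le> n+i'' \<and> n+i'' < n'" by linarith
      then show "ssat (\<tau> ` C) lam (\<tau> w') i'' \<psi>" using D IH1 by blast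
    qed
    have "n'-n \<ge> i" using A by linarith
    then show "ssat (\<tau> ` C) lam (\<tau> w') i (SU \<psi> \<chi>)"
      using B' E by auto
  qed
qed

end


lemma psat_chi:
  "psat W R L n w (chi \<phi>) =
    ((\<forall>k\<in>stps \<phi>. \<exists>w'. (w, w') \<in> R \<and> Inr k \<in> L (n, w')) \<and>
     (\<forall>w'. (w, w') \<in> R \<longrightarrow> (\<forall>k\<in>stps \<phi>. (\<forall>n'\<ge>n. Inr k \<in> L (n', w')) \<or> (\<forall>n'\<ge>n. Inr k \<notin> L (n', w')))))"
  using finite_stps[of \<phi>] by (auto simp: chi_def Let_def)

lemma part1:
  assumes "sltl_satisfiable \<phi>"
  shows "ptl_satisfiable TYPE(trace) (PAnd (chi \<phi>) (t2 \<phi>))"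
proof -
  obtain P lam \<sigma> where m: "sltl_model P lam" and s: "\<sigma> \<in> P" and f: "ssat P lam \<sigma> 0 \<phi>"
    using assms unfolding sltl_satisfiable_def by blast
  define L where "L = (\<lambda>(j::nat,\<tau>'::trace). Inl ` \<tau>' j \<union> Inr ` {k. \<tau>' \<in> lam (Sp k)})"
  have sub: "\<And>s. lam s \<subseteq> P" and ne: "\<And>s. lam s \<noteq> {}" using m by (auto simp: sltl_model_def)
  have pm: "ptl_model P (P \<times> P)" using s by (auto simp: ptl_model_def equiv_def refl_on_def sym_def trans_def)
  have t: "psat P (P\<times>P) L 0 \<sigma> (t2 \<phi>)" using dir1[OF m s, of 0 \<phi>] f unfolding L_def by simp
  have c1: "\<forall>k\<in>stps \<phi>. \<exists>w'. (\<sigma>, w') \<in> P\<times>P \<and> Inr k \<in> L (0, w')"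
  proof
    fix k
    obtain x where "x \<in> lam (Sp k)" using ne by blast
    then have "x \<in> P" "Inr k \<in> L (0, x)" using sub unfolding L_def by auto
    then show "\<exists>w'. (\<sigma>, w') \<in> P\<times>P \<and> Inr k \<in> L (0, w')" using s by blast
  qed
  have c2: "\<forall>w'. (\<sigma>, w') \<in> P\<times>P \<longrightarrow> (\<forall>k\<in>stps \<phi>. (\<forall>n'\<ge>0. Inr k \<in> L (n', w')) \<or> (\<forall>n'\<ge>0. Inr k \<notin> L (n', w')))"
    unfolding L_def by auto
  have "psat P (P\<times>P) L 0 \<sigma> (PAnd (chi \<phi>) (t2 \<phi>))"
  proof -
    have "psat P (P\<times>P) L 0 \<sigma> (chi \<phi>)" unfolding psat_chi using c1 c2 by blast
    then show ?thesis using t by simp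
  qed
  then show ?thesis unfolding ptl_satisfiable_def using pm s by blast
qed

lemma part2:
  assumes "ptl_satisfiable TYPE('w) (PAnd (chi \<phi>) (t2 \<phi>))"
  shows "sltl_satisfiable \<phi>"
proof -
  obtain W :: "'w set" and R L n w where pm: "ptl_model W R" and wW: "w \<in> W"
    and h: "psat W R L n w (PAnd (chi \<phi>) (t2 \<phi>))"
    using assms unfolding ptl_satisfiable_def by blast
  have eq: "equiv W R" using pm by (simp add: ptl_model_def)
  define S where "S = stps \<phi>"
  define C where "C = R `` {w}"
  define m where "m = Suc (Max (insert 0 (svars \<phi>)))"
  define \<tau> where "\<tau> = (\<lambda>w' i. {p. p < m \<and> Inl p \<in> L (n+i, w')} \<union> {m + k | k. Inr k \<in> L (n, w')})"
  define lam where "lam = (\<lambda>s. \<tau> ` {w'\<in>C. sp_syms s \<subseteq> S \<longrightarrow> insp2 L n s w'})"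
  have hc: "psat W R L n w (chi \<phi>)" and ht: "psat W R L n w (t2 \<phi>)" using h by auto
  have c1: "\<forall>k\<in>S. \<exists>w'. (w, w') \<in> R \<and> Inr k \<in> L (n, w')"
   and c2: "\<forall>w'. (w, w') \<in> R \<longrightarrow> (\<forall>k\<in>S. (\<forall>n'\<ge>n. Inr k \<in> L (n', w')) \<or> (\<forall>n'\<ge>n. Inr k \<notin> L (n', w')))"
    using hc unfolding psat_chi S_def by blast+
  have G: "\<forall>w'\<in>C. \<forall>k\<in>S. \<forall>j\<ge>n. (Inr k \<in> L (j, w')) = (Inr k \<in> L (n, w'))"
  proof (intro ballI allI impI)
    fix w' k j assume "w' \<in> C" "k \<in> S" "j \<ge> n"
    then have "(\<forall>n'\<ge>n. Inr k \<in> L (n', w')) \<or> (\<forall>n'\<ge>n. Inr k \<notin> L (n', w'))"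
      using c2 unfolding C_def by blast
    then show "(Inr k \<in> L (j, w')) = (Inr k \<in> L (n, w'))" using \<open>j \<ge> n\<close> by auto
  qed
  interpret d2 W R L C w S n m \<tau> lam
    apply unfold_locales
    apply (rule eq)
   apply (rule C_def)
  apply (rule G)
   apply (simp add: \<tau>_def)
  apply (simp add: lam_def)
  done
  have wC: "w \<in> C" using eq wW unfolding C_def equiv_def refl_on_def by blast
  have mod: "sltl_model (\<tau> ` C) lam"
    unfolding sltl_model_def
  proof (intro conjI allI)
    show "\<tau> ` C \<noteq> {}" using wC by blast
  next
    fix s show "lam s \<subseteq> \<tau> ` C" by (rule lamsub)
  next
    fix s show "lam s \<noteq> {}"
    proof (cases s)
      case Star then show ?thesis using wC unfolding lam_def by auto
    next
      case (Sp k)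
      show ?thesis
      proof (cases "k \<in> S")
        case True
        then obtain w' where "(w, w') \<in> R" "Inr k \<in> L (n, w')" using c1 by blast
        then show ?thesis using Sp unfolding lam_def C_def by auto
      next
        case False
        then show ?thesis using Sp wC unfolding lam_def by auto
      qed
    qed
  next
    show "lam Star = \<tau> ` C" unfolding lam_def by simp
  qed
  have vs: "svars \<phi> \<subseteq> {..<m}"
  proof
    fix p assume "p \<in> svars \<phi>"
    then have "p \<le> Max (insert 0 (svars \<phi>))" using finite_svars by simp
    then show "p \<in> {..<m}" unfolding m_def by simp
  qed
  have "ssat (\<tau> ` C) lam (\<tau> w) 0 \<phi>"
    using main[of \<phi> w 0] vs wC ht unfolding S_def by simp
  then show ?thesis unfolding sltl_satisfiable_def using mod wC by blast
qed

theorem lemma2: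
  fixes \<phi> :: sltl
  shows "(sltl_satisfiable \<phi> \<longrightarrow> ptl_satisfiable TYPE(trace) (PAnd (chi \<phi>) (t2 \<phi>)))
       \<and> (ptl_satisfiable TYPE('w) (PAnd (chi \<phi>) (t2 \<phi>)) \<longrightarrow> sltl_satisfiable \<phi>)"
  using part1 part2 by blast

end
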